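(* Let $\Omega\subset\mathbb{R}^N$, $N\ge2$, be a Lipschitz domain with $0\in\partial\Omega$ such that $\partial\Omega$ is of class $C^2$ near $0$. Then there exist constants $c=c(\Omega)>0$ and $r_0=r_0(\Omega)>0$ such that for all $r\in(0,r_0)$ and all $u\in H^1_0(\Omega\cap B_r(0))$, $$\int_{\Omega\cap B_r(0)}|\nabla u|^2dx-\frac{N^2}{4}\int_{\Omega\cap B_r(0)}\frac{|u|^2}{|x|^2}dx\ \ge\ c\int_{\Omega\cap B_r(0)}\frac{|u|^2}{|x|^2|\log|x||^2}dx.$$ *)

theory Defs
  imports "HOL-Analysis.Analysis"
begin

definition hyp_proj :: "real^'n \<Rightarrow> real^'n \<Rightarrow> real^'n" where
  "hyp_proj nu x = x - (x \<bullet> nu) *\<^sub>R nu"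

text \<open>Lipschitz domain: open, connected, and near every boundary point it is (after a rotation)
  the region below the graph of a Lipschitz function over a hyperplane.\<close>
definition lipschitz_domain :: "(real^'n) set \<Rightarrow> bool" where
  "lipschitz_domain \<Omega> \<longleftrightarrow> open \<Omega> \<and> connected \<Omega> \<and> \<Omega> \<noteq> {} \<and>
     (\<forall>p \<in> frontier \<Omega>. \<exists>\<rho> > 0. \<exists>nu h L. norm nu = 1 \<and> L-lipschitz_on UNIV h \<and>
        \<Omega> \<inter> ball p \<rho> = {x \<in> ball p \<rho>. x \<bullet> nu < h (hyp_proj nu x)})"

definition C2_fun :: "(real^'n \<Rightarrow> real) \<Rightarrow> bool" where
  "C2_fun h \<longleftrightarrow> (\<exists>g H. (\<forall>y. (h has_derivative (\<lambda>v. g y \<bullet> v)) (at y)) \<and>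
       (\<forall>y. (g has_derivative H y) (at y)) \<and> (\<forall>v. continuous_on UNIV (\<lambda>y. H y v)))"

definition C2_boundary_near :: "(real^'n) set \<Rightarrow> real^'n \<Rightarrow> bool" where
  "C2_boundary_near \<Omega> p \<longleftrightarrow> (\<exists>\<rho> > 0. \<exists>nu h. norm nu = 1 \<and> C2_fun h \<and>
        \<Omega> \<inter> ball p \<rho> = {x \<in> ball p \<rho>. x \<bullet> nu < h (hyp_proj nu x)})"

definition test_fun :: "(real^'n) set \<Rightarrow> (real^'n \<Rightarrow> real) \<Rightarrow> (real^'n \<Rightarrow> real^'n) \<Rightarrow> bool" where
  "test_fun U \<phi> g \<longleftrightarrow> (\<forall>x. (\<phi> has_derivative (\<lambda>v. g x \<bullet> v)) (at x)) \<and> continuous_on UNIV g \<and>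
     compact (closure {x. \<phi> x \<noteq> 0}) \<and> closure {x. \<phi> x \<noteq> 0} \<subseteq> U"

text \<open>u belongs to H^1_0(U) with (weak) gradient G: (u, G) is an L^2-limit of
  (\<phi>_k, grad \<phi>_k) for compactly supported C^1 functions \<phi>_k in U, i.e. u lies in the
  closure of the test functions w.r.t. the H^1 norm.\<close>
definition H10 :: "(real^'n) set \<Rightarrow> (real^'n \<Rightarrow> real) \<Rightarrow> (real^'n \<Rightarrow> real^'n) \<Rightarrow> bool" where
  "H10 U u G \<longleftrightarrow> u \<in> borel_measurable lborel \<and> G \<in> borel_measurable lborel \<and>
     (\<exists>\<phi> g. (\<forall>k. test_fun U (\<phi> k) (g k)) \<and>
        ((\<lambda>k. \<integral>\<^sup>+x. ennreal ((\<phi> k x - u x)\<^sup>2) \<partial>lborel) \<longlonglongrightarrow> 0) \<and>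
        ((\<lambda>k. \<integral>\<^sup>+x. ennreal ((norm (g k x - G x))\<^sup>2) \<partial>lborel) \<longlonglongrightarrow> 0))"

end

theory Submission
  imports Defs
begin

lemma translate_integral:
  fixes f :: "'a::euclidean_space \<Rightarrow> real"
  assumes "integrable lborel f"
  shows "integrable lborel (\<lambda>x. f (c + x))" "integral\<^sup>L lborel (\<lambda>x. f (c + x)) = integral\<^sup>L lborel f"
proof -
  have m: "f \<in> borel_measurable borel" using assms by auto
  have "integrable (distr lborel borel ((+) c)) f" using assms by (simp add: lborel_distr_plus)
  then show "integrable lborel (\<lambda>x. f (c + x))"
    by (subst (asm) integrable_distr_eq) (auto simp: m)
  have "integral\<^sup>L lborel f = integral\<^sup>L (distr lborel borel ((+) c)) f" by (simp add: lborel_distr_plus)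
  also have "\<dots> = integral\<^sup>L lborel (\<lambda>x. f (c + x))"
    by (rule integral_distr) (auto simp: m)
  finally show "integral\<^sup>L lborel (\<lambda>x. f (c + x)) = integral\<^sup>L lborel f" by simp
qed

lemma cont_compact_integrable:
  fixes f :: "'a::euclidean_space \<Rightarrow> real"
  assumes "continuous_on UNIV f" "compact K" "\<And>x. x \<notin> K \<Longrightarrow> f x = 0"
  shows "integrable lborel f"
proof -
  have "integrable lborel (\<lambda>x. indicator K x *\<^sub>R f x)"
    by (rule borel_integrable_compact[OF assms(2)]) (rule continuous_on_subset[OF assms(1)], auto)
  also have "(\<lambda>x. indicator K x *\<^sub>R f x) = f" using assms(3) by (auto simp: indicator_def fun_eq_iff)
  finally show ?thesis .
qed

lemma ibp_direction:
  fixes f f' :: "'a::euclidean_space \<Rightarrow> real" and e :: 'a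
  assumes der: "\<And>x. ((\<lambda>s. f (x + s *\<^sub>R e)) has_real_derivative f' x) (at 0)"
    and cf: "continuous_on UNIV f" and cf': "continuous_on UNIV f'"
    and K: "compact K" and z: "\<And>x. x \<notin> K \<Longrightarrow> f x = 0" and z': "\<And>x. x \<notin> K \<Longrightarrow> f' x = 0"
  shows "integrable lborel f'" "integral\<^sup>L lborel f' = 0"
proof -
  obtain B where B: "\<And>x. \<bar>f' x\<bar> \<le> B"
  proof -
    have "compact (f' ` K)" by (rule compact_continuous_image[OF continuous_on_subset[OF cf'] K]) auto
    then obtain B0 where "\<forall>y\<in>f' ` K. norm y \<le> B0" using compact_imp_bounded bounded_iff by metis
    then have "\<bar>f' x\<bar> \<le> max B0 0" for x
      by (cases "x \<in> K") (auto simp: z' intro: max.coboundedI1)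
    then show ?thesis using that by blast
  qed
  obtain R where R: "\<And>x. x \<in> K \<Longrightarrow> norm x \<le> R"
    using compact_imp_bounded[OF K] unfolding bounded_pos by blast
  have derall: "((\<lambda>s. f (x + s *\<^sub>R e)) has_real_derivative f' (x + t *\<^sub>R e)) (at t)" for x t
  proof -
    have "((\<lambda>s. f ((x + t *\<^sub>R e) + s *\<^sub>R e)) has_real_derivative f' (x + t *\<^sub>R e)) (at 0)" by (rule der)
    then have "((\<lambda>s. f ((x + t *\<^sub>R e) + (s - t) *\<^sub>R e)) has_real_derivative f' (x + t *\<^sub>R e)) (at (0 + t))"
      using DERIV_shift[where f="\<lambda>s. f ((x + t *\<^sub>R e) + (s - t) *\<^sub>R e)" and z=t and x=0]
      by simp
    moreover have "(\<lambda>s. f ((x + t *\<^sub>R e) + (s - t) *\<^sub>R e)) = (\<lambda>s. f (x + s *\<^sub>R e))"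
      by (auto simp: algebra_simps)
    ultimately show ?thesis by simp
  qed
  have mvt: "\<bar>f (x + t *\<^sub>R e) - f x\<bar> \<le> B * \<bar>t\<bar>" for x t
  proof -
    consider "t = 0" | "0 < t" | "t < 0" by linarith
    then show ?thesis
    proof cases
      case 1 then show ?thesis by simp
    next
      case 2
      obtain z where "f (x + t *\<^sub>R e) - f (x + 0 *\<^sub>R e) = (t - 0) * f' (x + z *\<^sub>R e)"
        using MVT2[OF 2, of "\<lambda>s. f (x + s *\<^sub>R e)" "\<lambda>s. f' (x + s *\<^sub>R e)"] derall by blast
      then show ?thesis using B[of "x + z *\<^sub>R e"] 2 by (simp add: abs_mult mult.commute mult_left_mono)
    next
      case 3
      obtain z where "f (x + 0 *\<^sub>R e) - f (x + t *\<^sub>R e) = (0 - t) * f' (x + z *\<^sub>R e)"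
        using MVT2[OF 3, of "\<lambda>s. f (x + s *\<^sub>R e)" "\<lambda>s. f' (x + s *\<^sub>R e)"] derall by blast
      then have "\<bar>f (x + t *\<^sub>R e) - f x\<bar> = \<bar>t\<bar> * \<bar>f' (x + z *\<^sub>R e)\<bar>" using 3 by (simp add: abs_mult abs_minus_commute)
      then show ?thesis using B[of "x + z *\<^sub>R e"] 3 by (simp add: mult.commute mult_left_mono)
    qed
  qed
  have intf: "integrable lborel f" by (rule cont_compact_integrable[OF cf K z])
  define t where "t n = 1 / (real n + 1)" for n
  have tpos: "t n > 0" for n by (simp add: t_def)
  define q where "q n x = (f (x + t n *\<^sub>R e) - f x) / t n" for n x
  have mf: "f \<in> borel_measurable lborel" using intf by auto
  have mf': "f' \<in> borel_measurable lborel" using cf' by (simp add: borel_measurable_continuous_onI)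
  have intq: "integrable lborel (q n)" and intq0: "integral\<^sup>L lborel (q n) = 0" for n
  proof -
    have i1: "integrable lborel (\<lambda>x. f (x + t n *\<^sub>R e))"
      using translate_integral(1)[OF intf, of "t n *\<^sub>R e"] by (simp add: add.commute)
    have i2: "integral\<^sup>L lborel (\<lambda>x. f (x + t n *\<^sub>R e)) = integral\<^sup>L lborel f"
      using translate_integral(2)[OF intf, of "t n *\<^sub>R e"] by (simp add: add.commute)
    show "integrable lborel (q n)" unfolding q_def using i1 intf by auto
    show "integral\<^sup>L lborel (q n) = 0" unfolding q_def using i1 intf i2 by (simp add: integral_diff)
  qed
  have lim: "(\<lambda>n. q n x) \<longlonglongrightarrow> f' x" for x
  proof -
    have "t \<longlonglongrightarrow> 0" unfolding t_def using LIMSEQ_inverse_real_of_nat by (simp add: inverse_eq_divide add.commute)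
    moreover have "\<forall>n. t n \<noteq> 0" using tpos by (metis less_irrefl)
    moreover have "((\<lambda>s. (f (x + s *\<^sub>R e) - f x) / s) \<longlongrightarrow> f' x) (at 0)"
      using der[of x] unfolding has_field_derivative_iff by simp
    ultimately show ?thesis unfolding q_def
      using iffD2[OF LIMSEQ_SEQ_conv] by blast
  qed
  have bound: "norm (q n x) \<le> B * indicator (cball (0::'a) (R + norm e)) x" for n x
  proof (cases "x \<in> cball 0 (R + norm e)")
    case True
    have "\<bar>f (x + t n *\<^sub>R e) - f x\<bar> / t n \<le> B" using mvt[of x "t n"] tpos[of n]
      by (simp add: divide_le_eq)
    then show ?thesis using True tpos[of n] by (simp add: q_def abs_div)
  next
    case False
    have tn1: "t n \<le> 1" unfolding t_def by simp
    have nx: "norm x > R + norm e" using False by (simp add: dist_norm)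
    have "x \<notin> K" using nx R[of x] by (smt (verit) norm_ge_zero)
    moreover have "x + t n *\<^sub>R e \<notin> K"
    proof
      assume "x + t n *\<^sub>R e \<in> K"
      then have "norm (x + t n *\<^sub>R e) \<le> R" by (rule R)
      moreover have "norm x \<le> norm (x + t n *\<^sub>R e) + norm (t n *\<^sub>R e)" using norm_triangle_ineq[of "x + t n *\<^sub>R e" "- (t n *\<^sub>R e)"] by simp
      moreover have "norm (t n *\<^sub>R e) \<le> norm e" using tn1 tpos[of n] by (simp add: mult_left_le_one_le)
      ultimately show False using nx by linarith
    qed
    ultimately show ?thesis using z False by (simp add: q_def indicator_def)
  qed
  have intw: "integrable lborel (\<lambda>x. B * indicator (cball (0::'a) (R + norm e)) x)"
    by (intro integrable_mult_right integrable_real_indicator) (use emeasure_compact_finite[of "cball (0::'a) (R + norm e)"] in auto)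
  have mq: "q n \<in> borel_measurable lborel" for n using intq[of n] by auto
  have "(\<lambda>n. integral\<^sup>L lborel (q n)) \<longlonglongrightarrow> integral\<^sup>L lborel f'"
    by (rule integral_dominated_convergence[where s=q, OF mf' _ intw]) (use lim bound mq in auto)
  then show "integral\<^sup>L lborel f' = 0" using intq0 by (simp add: LIMSEQ_const_iff)
  show "integrable lborel f'"
    by (rule integrable_dominated_convergence[where s=q, OF mf' _ intw]) (use lim bound mq in auto)
qed

lemma sq_split:
  fixes a b :: "'a::real_normed_vector"
  assumes "e > 0"
  shows "(norm a)\<^sup>2 \<le> (1 + e) * (norm b)\<^sup>2 + (1 + 1/e) * (norm (a - b))\<^sup>2"
proof -
  have t: "norm a \<le> norm b + norm (a - b)" using norm_triangle_ineq[of b "a - b"] by simp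
  have "(norm a)\<^sup>2 \<le> (norm b + norm (a - b))\<^sup>2" using t by (simp add: power_mono)
  also have "\<dots> \<le> (1 + e) * (norm b)\<^sup>2 + (1 + 1/e) * (norm (a - b))\<^sup>2"
  proof -
    have "0 \<le> (e * norm b - norm (a - b))\<^sup>2 / e" using assms by simp
    also have "(e * norm b - norm (a - b))\<^sup>2 / e = e * (norm b)\<^sup>2 - 2 * norm b * norm (a - b) + (norm (a - b))\<^sup>2 / e"
      using assms by (simp add: power2_eq_square field_simps)
    finally show ?thesis by (simp add: power2_eq_square field_simps)
  qed
  finally show ?thesis .
qed

lemma AE_subseq_L2:
  fixes f :: "nat \<Rightarrow> 'a::euclidean_space \<Rightarrow> real"
  assumes m: "\<And>k. f k \<in> borel_measurable lborel" "u \<in> borel_measurable lborel"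
    and lim: "(\<lambda>k. \<integral>\<^sup>+x. ennreal ((f k x - u x)\<^sup>2) \<partial>lborel) \<longlonglongrightarrow> 0"
  shows "\<exists>s. strict_mono s \<and> (AE x in lborel. (\<lambda>n. f (s n) x) \<longlonglongrightarrow> u x)"
proof -
  obtain N where N: "\<And>k. k \<ge> N \<Longrightarrow> (\<integral>\<^sup>+x. ennreal ((f k x - u x)\<^sup>2) \<partial>lborel) < 1"
    using order_tendstoD(2)[OF lim, of 1] by (auto simp: eventually_sequentially)
  define v where "v n x = (f (n + N) x - u x)\<^sup>2" for n x
  have mv: "v n \<in> borel_measurable lborel" for n unfolding v_def using m by measurable
  have fin: "(\<integral>\<^sup>+x. ennreal (v n x) \<partial>lborel) < \<infinity>" for n
  proof -
    have "(\<integral>\<^sup>+x. ennreal (v n x) \<partial>lborel) < 1" using N[of "n + N"] unfolding v_def by simp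
    then show ?thesis using ennreal_one_less_top order.strict_trans by (metis infinity_ennreal_def)
  qed
  have iv: "integrable lborel (v n)" for n
    by (rule integrableI_nonneg[OF mv _ fin]) (auto simp: v_def)
  have eq: "(\<integral>x. norm (v n x) \<partial>lborel) = enn2real (\<integral>\<^sup>+x. ennreal (v n x) \<partial>lborel)" for n
    using mv[of n] by (subst integral_eq_nn_integral) (auto simp: v_def[abs_def])
  have lim2: "(\<lambda>n. \<integral>\<^sup>+x. ennreal (v n x) \<partial>lborel) \<longlonglongrightarrow> ennreal 0"
    unfolding v_def using LIMSEQ_ignore_initial_segment[OF lim, of N] by simp
  have "(\<lambda>n. (\<integral>x. norm (v n x) \<partial>lborel)) \<longlonglongrightarrow> 0"
    unfolding eq by (rule tendsto_enn2real[OF lim2]) simp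
  from tendsto_L1_AE_subseq[OF iv this] obtain r where r: "strict_mono r"
    and ae: "AE x in lborel. (\<lambda>n. v (r n) x) \<longlonglongrightarrow> 0" by blast
  have "AE x in lborel. (\<lambda>n. f (r n + N) x) \<longlonglongrightarrow> u x"
    using ae
  proof eventually_elim
    fix x assume "(\<lambda>n. v (r n) x) \<longlonglongrightarrow> 0"
    then have "(\<lambda>n. sqrt (v (r n) x)) \<longlonglongrightarrow> sqrt 0" by (intro tendsto_real_sqrt)
    then have "(\<lambda>n. \<bar>f (r n + N) x - u x\<bar>) \<longlonglongrightarrow> 0" by (simp add: v_def)
    then have "(\<lambda>n. f (r n + N) x - u x) \<longlonglongrightarrow> 0" by (simp add: tendsto_rabs_zero_iff)
    then show "(\<lambda>n. f (r n + N) x) \<longlonglongrightarrow> u x" by (simp add: LIM_zero_iff)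
  qed
  moreover have "strict_mono (\<lambda>n. r n + N)" using r by (simp add: strict_mono_def)
  ultimately show ?thesis by blast
qed

lemma test_fun_cont:
  assumes "test_fun U \<phi> g"
  shows "continuous_on UNIV \<phi>" "continuous_on UNIV g"
proof -
  have "\<And>x. isCont \<phi> x" using assms unfolding test_fun_def
    by (meson has_derivative_continuous)
  then show "continuous_on UNIV \<phi>" by (simp add: continuous_at_imp_continuous_on)
  show "continuous_on UNIV g" using assms unfolding test_fun_def by blast
qed

lemma H10_pass:
  fixes U :: "(real^'n) set" and w :: "real^'n \<Rightarrow> real"
  assumes U: "open U" and wm: "w \<in> borel_measurable lborel" and w0: "\<And>x. w x \<ge> 0"
   and ineq: "\<And>\<phi> g. test_fun U \<phi> g \<Longrightarrow> (\<integral>\<^sup>+x\<in>U. ennreal (w x * (\<phi> x)\<^sup>2) \<partial>lborel) \<le> (\<integral>\<^sup>+x\<in>U. ennreal ((norm (g x))\<^sup>2) \<partial>lborel)"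
   and H: "H10 U u G"
  shows "(\<integral>\<^sup>+x\<in>U. ennreal (w x * (u x)\<^sup>2) \<partial>lborel) \<le> (\<integral>\<^sup>+x\<in>U. ennreal ((norm (G x))\<^sup>2) \<partial>lborel)"
proof -
  from H obtain \<phi> g where mu: "u \<in> borel_measurable lborel" and mG: "G \<in> borel_measurable lborel"
    and tf: "\<And>k. test_fun U (\<phi> k) (g k)"
    and L1: "(\<lambda>k. \<integral>\<^sup>+x. ennreal ((\<phi> k x - u x)\<^sup>2) \<partial>lborel) \<longlonglongrightarrow> 0"
    and L2: "(\<lambda>k. \<integral>\<^sup>+x. ennreal ((norm (g k x - G x))\<^sup>2) \<partial>lborel) \<longlonglongrightarrow> 0"
    unfolding H10_def by blast
  have m\<phi>: "\<phi> k \<in> borel_measurable lborel" for k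
    using test_fun_cont(1)[OF tf[of k]] by (simp add: borel_measurable_continuous_onI)
  have mg: "g k \<in> borel_measurable lborel" for k
    using test_fun_cont(2)[OF tf[of k]] by (simp add: borel_measurable_continuous_onI)
  have mU: "U \<in> sets lborel" using U by simp
  obtain s where s: "strict_mono s" and ae: "AE x in lborel. (\<lambda>n. \<phi> (s n) x) \<longlonglongrightarrow> u x"
    using AE_subseq_L2[OF m\<phi> mu L1] by blast
  define X where "X = (\<integral>\<^sup>+x\<in>U. ennreal ((norm (G x))\<^sup>2) \<partial>lborel)"
  define R where "R = (\<integral>\<^sup>+x\<in>U. ennreal (w x * (u x)\<^sup>2) \<partial>lborel)"
  define Y where "Y n = (\<integral>\<^sup>+x\<in>U. ennreal (w x * (\<phi> (s n) x)\<^sup>2) \<partial>lborel)" for n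
  have fatou: "R \<le> liminf Y"
  proof -
    have "R = (\<integral>\<^sup>+x. liminf (\<lambda>n. ennreal (w x * (\<phi> (s n) x)\<^sup>2) * indicator U x) \<partial>lborel)"
      unfolding R_def
    proof (rule nn_integral_cong_AE)
      show "AE x in lborel. ennreal (w x * (u x)\<^sup>2) * indicator U x =
          liminf (\<lambda>n. ennreal (w x * (\<phi> (s n) x)\<^sup>2) * indicator U x)"
        using ae
      proof eventually_elim
        fix x assume "(\<lambda>n. \<phi> (s n) x) \<longlonglongrightarrow> u x"
        then have "(\<lambda>n. ennreal (w x * (\<phi> (s n) x)\<^sup>2) * indicator U x) \<longlonglongrightarrow> ennreal (w x * (u x)\<^sup>2) * indicator U x"
          by (intro tendsto_intros) (auto simp: indicator_def)
        then show "ennreal (w x * (u x)\<^sup>2) * indicator U x =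
          liminf (\<lambda>n. ennreal (w x * (\<phi> (s n) x)\<^sup>2) * indicator U x)"
          by (simp add: lim_imp_Liminf)
      qed
    qed
    also have "\<dots> \<le> liminf (\<lambda>n. \<integral>\<^sup>+x. ennreal (w x * (\<phi> (s n) x)\<^sup>2) * indicator U x \<partial>lborel)"
      by (rule nn_integral_liminf) (use m\<phi> wm mU in measurable)
    finally show ?thesis unfolding Y_def .
  qed
  have epsb: "R \<le> ennreal (1 + e) * X" if e: "e > 0" for e
  proof -
    define B where "B n = (\<integral>\<^sup>+x. ennreal ((norm (g (s n) x - G x))\<^sup>2) \<partial>lborel)" for n
    have YB: "Y n \<le> ennreal (1 + e) * X + ennreal (1 + 1/e) * B n" for n
    proof -
      have "Y n \<le> (\<integral>\<^sup>+x\<in>U. ennreal ((norm (g (s n) x))\<^sup>2) \<partial>lborel)"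
        unfolding Y_def by (rule ineq[OF tf])
      also have "\<dots> \<le> (\<integral>\<^sup>+x. ennreal (1 + e) * (ennreal ((norm (G x))\<^sup>2) * indicator U x)
                     + ennreal (1 + 1/e) * ennreal ((norm (g (s n) x - G x))\<^sup>2) \<partial>lborel)"
      proof (rule nn_integral_mono)
        fix x
        have "(norm (g (s n) x))\<^sup>2 \<le> (1 + e) * (norm (G x))\<^sup>2 + (1 + 1/e) * (norm (g (s n) x - G x))\<^sup>2"
          by (rule sq_split[OF e])
        then have "ennreal ((norm (g (s n) x))\<^sup>2) \<le> ennreal (1 + e) * ennreal ((norm (G x))\<^sup>2) + ennreal (1 + 1/e) * ennreal ((norm (g (s n) x - G x))\<^sup>2)"
          using e by (simp add: ennreal_mult[symmetric] ennreal_plus[symmetric] del: ennreal_plus)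
        then show "ennreal ((norm (g (s n) x))\<^sup>2) * indicator U x \<le> ennreal (1 + e) * (ennreal ((norm (G x))\<^sup>2) * indicator U x)
                     + ennreal (1 + 1/e) * ennreal ((norm (g (s n) x - G x))\<^sup>2)"
          by (cases "x \<in> U") auto
      qed
      also have "\<dots> = ennreal (1 + e) * X + ennreal (1 + 1/e) * B n"
        unfolding X_def B_def
        by (subst nn_integral_add) (use mG mg mU in \<open>auto simp: nn_integral_cmult\<close>)
      finally show ?thesis .
    qed
    have Bl: "B \<longlonglongrightarrow> 0" unfolding B_def using LIMSEQ_subseq_LIMSEQ[OF L2 s] by (simp add: o_def)
    have "(\<lambda>n. ennreal (1 + e) * X + ennreal (1 + 1/e) * B n) \<longlonglongrightarrow> ennreal (1 + e) * X + ennreal (1 + 1/e) * 0"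
      by (intro tendsto_intros Bl) auto
    then have "liminf (\<lambda>n. ennreal (1 + e) * X + ennreal (1 + 1/e) * B n) = ennreal (1 + e) * X"
      by (simp add: lim_imp_Liminf)
    moreover have "liminf Y \<le> liminf (\<lambda>n. ennreal (1 + e) * X + ennreal (1 + 1/e) * B n)"
      by (rule Liminf_mono) (use YB in auto)
    ultimately show ?thesis using fatou by simp
  qed
  have "(\<lambda>n. ennreal (1 + 1 / (real n + 1)) * X) \<longlonglongrightarrow> ennreal (1 + 0) * X"
  proof (rule tendsto_mult_ennreal)
    have "(\<lambda>n. 1 / (real n + 1)) \<longlonglongrightarrow> 0"
      using LIMSEQ_inverse_real_of_nat by (simp add: inverse_eq_divide add.commute)
    then show "(\<lambda>n. ennreal (1 + 1 / (real n + 1))) \<longlonglongrightarrow> ennreal (1 + 0)"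
      by (intro tendsto_intros)
  qed auto
  then have "R \<le> ennreal (1 + 0) * X"
    by (rule LIMSEQ_le_const) (use epsb in auto)
  then show ?thesis unfolding R_def X_def by simp
qed

definition tr :: "((real^'n) \<Rightarrow> (real^'n)) \<Rightarrow> real" where
  "tr f = (\<Sum>i\<in>Basis. f i \<bullet> i)"

lemma sum_inner_basis: "(\<Sum>i\<in>Basis. (a \<bullet> i) * (w \<bullet> i)) = a \<bullet> (w::'a::euclidean_space)"
  by (simp only: euclidean_inner[of a w])

lemma tr_add: "tr (\<lambda>v. f v + g v) = tr f + tr g"
  by (simp add: tr_def inner_add_left sum.distrib)
lemma tr_diff: "tr (\<lambda>v. f v - g v) = tr f - tr g"
  by (simp add: tr_def inner_diff_left sum_subtractf)
lemma tr_minus: "tr (\<lambda>v. - f v) = - tr f"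
  by (simp add: tr_def sum_negf)
lemma tr_scale: "tr (\<lambda>v. c *\<^sub>R f v) = c * tr f"
  by (simp add: tr_def sum_distrib_left)
lemma tr_rank1: "tr (\<lambda>v. (a \<bullet> v) *\<^sub>R w) = a \<bullet> w"
  unfolding tr_def inner_scaleR_left by (rule sum_inner_basis)
lemma tr_id: "tr (\<lambda>v. v :: real^'n) = real CARD('n)"
  by (simp add: tr_def)

lemma hardy_test:
  fixes U :: "(real^'n) set" and F :: "real^'n \<Rightarrow> real^'n" and F' :: "real^'n \<Rightarrow> real^'n \<Rightarrow> real^'n"
    and W :: "real^'n \<Rightarrow> real"
  assumes U: "open U"
    and Fd: "\<And>x. x \<in> U \<Longrightarrow> (F has_derivative F' x) (at x)"
    and F'c: "\<And>v. continuous_on U (\<lambda>x. F' x v)"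
    and Wm: "W \<in> borel_measurable lborel" and W0: "\<And>x. W x \<ge> 0"
    and Q: "\<And>x. x \<in> U \<Longrightarrow> tr (F' x) - (norm (F x))\<^sup>2 \<ge> W x"
    and tf: "test_fun U \<phi> g"
  shows "(\<integral>\<^sup>+x\<in>U. ennreal (W x * (\<phi> x)\<^sup>2) \<partial>lborel) \<le> (\<integral>\<^sup>+x\<in>U. ennreal ((norm (g x))\<^sup>2) \<partial>lborel)"
proof -
  define K where "K = closure {x. \<phi> x \<noteq> 0}"
  have \<phi>d: "\<And>x. (\<phi> has_derivative (\<lambda>v. g x \<bullet> v)) (at x)" and gc: "continuous_on UNIV g"
    and Kc: "compact K" and KU: "K \<subseteq> U"
    using tf unfolding test_fun_def K_def by blast+
  have \<phi>c: "continuous_on UNIV \<phi>" by (rule test_fun_cont(1)[OF tf])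
  have \<phi>0: "\<phi> x = 0" if "x \<notin> K" for x
  proof -
    have "{x. \<phi> x \<noteq> 0} \<subseteq> K" unfolding K_def by (rule closure_subset)
    then show ?thesis using that by blast
  qed
  have oK: "open (- K)" using Kc by (simp add: compact_imp_closed open_Compl)
  have g0: "g x = 0" if "x \<notin> K" for x
  proof -
    have "((\<lambda>y. 0::real) has_derivative (\<lambda>v. g x \<bullet> v)) (at x)"
      by (rule has_derivative_transform_within_open[OF \<phi>d oK]) (use that \<phi>0 in auto)
    then have "(\<lambda>v. g x \<bullet> v) = (\<lambda>v. 0)"
      using has_derivative_unique[OF _ has_derivative_const] by blast
    then have "g x \<bullet> g x = 0" using fun_cong[of "\<lambda>v. g x \<bullet> v" "\<lambda>v. 0" "g x"] by simp
    then show ?thesis by simp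
  qed
  define V where "V x = (if x \<in> U then (\<phi> x)\<^sup>2 *\<^sub>R F x else 0)" for x
  define V' where "V' x v = (if x \<in> U then (2 * \<phi> x * (g x \<bullet> v)) *\<^sub>R F x + (\<phi> x)\<^sup>2 *\<^sub>R F' x v else 0)" for x v
  have V0: "V x = 0" if "x \<notin> K" for x using that \<phi>0 by (simp add: V_def)
  have V'0: "V' x v = 0" if "x \<notin> K" for x v using that \<phi>0 g0 by (simp add: V'_def)
  have Vd: "(V has_derivative V' x) (at x)" for x
  proof (cases "x \<in> U")
    case True
    have "((\<lambda>y. (\<phi> y)\<^sup>2 *\<^sub>R F y) has_derivative (\<lambda>v. (2 * \<phi> x * (g x \<bullet> v)) *\<^sub>R F x + (\<phi> x)\<^sup>2 *\<^sub>R F' x v)) (at x)"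
      using \<phi>d[of x] Fd[OF True]
      by (auto intro!: derivative_eq_intros simp: power2_eq_square algebra_simps)
    then have "(V has_derivative (\<lambda>v. (2 * \<phi> x * (g x \<bullet> v)) *\<^sub>R F x + (\<phi> x)\<^sup>2 *\<^sub>R F' x v)) (at x)"
      by (rule has_derivative_transform_within_open[OF _ U True]) (simp add: V_def)
    then show ?thesis using True by (simp add: V'_def[abs_def])
  next
    case False
    then have "x \<notin> K" using KU by blast
    have "((\<lambda>y. 0) has_derivative (\<lambda>v. 0)) (at x)" by simp
    then have "(V has_derivative (\<lambda>v. 0)) (at x)"
      by (rule has_derivative_transform_within_open[OF _ oK]) (use \<open>x \<notin> K\<close> V0 in auto)
    then show ?thesis using False by (simp add: V'_def[abs_def])
  qed
  have V'c: "continuous_on UNIV (\<lambda>x. V' x v)" for v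
  proof -
    have "continuous_on U (\<lambda>x. V' x v)"
    proof -
      have "continuous_on U (\<lambda>x. (2 * \<phi> x * (g x \<bullet> v)) *\<^sub>R F x + (\<phi> x)\<^sup>2 *\<^sub>R F' x v)"
      proof -
        have Fc: "continuous_on U F"
          using Fd by (meson continuous_at_imp_continuous_on has_derivative_continuous)
        show ?thesis
          by (intro continuous_intros continuous_on_subset[OF \<phi>c] continuous_on_subset[OF gc] Fc F'c) auto
      qed
      then show ?thesis by (rule continuous_on_eq) (simp add: V'_def)
    qed
    moreover have "continuous_on (- K) (\<lambda>x. V' x v)"
      by (rule continuous_on_eq[of _ "\<lambda>x. 0"]) (auto simp: V'0)
    ultimately have "continuous_on (U \<union> - K) (\<lambda>x. V' x v)"
      by (rule continuous_on_open_Un[OF U oK])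
    moreover have "U \<union> - K = UNIV" using KU by blast
    ultimately show ?thesis by simp
  qed
  have Vc: "continuous_on UNIV V"
    using Vd by (meson continuous_at_imp_continuous_on has_derivative_continuous)
  have ibp: "integrable lborel (\<lambda>x. V' x i \<bullet> i) \<and> integral\<^sup>L lborel (\<lambda>x. V' x i \<bullet> i) = 0" for i
  proof -
    have der: "((\<lambda>s. V (x + s *\<^sub>R i) \<bullet> i) has_real_derivative V' x i \<bullet> i) (at 0)" for x
    proof -
      have d1: "((\<lambda>s. x + s *\<^sub>R i) has_derivative (\<lambda>s. s *\<^sub>R i)) (at (0::real))"
        by (auto intro!: derivative_eq_intros)
      have d2: "(V has_derivative V' x) (at ((\<lambda>s. x + s *\<^sub>R i) 0))" using Vd[of x] by simp
      have "((\<lambda>s. V (x + s *\<^sub>R i)) has_derivative (\<lambda>s. V' x (s *\<^sub>R i))) (at 0)"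
        using has_derivative_compose[OF d1 d2] by simp
      then have "((\<lambda>s. V (x + s *\<^sub>R i) \<bullet> i) has_derivative (\<lambda>s. V' x (s *\<^sub>R i) \<bullet> i)) (at 0)"
        by (auto intro!: derivative_eq_intros)
      moreover have "(\<lambda>s. V' x (s *\<^sub>R i) \<bullet> i) = (\<lambda>s. s * (V' x i \<bullet> i))"
      proof -
        have "linear (V' x)" using Vd[of x] has_derivative_linear by blast
        then show ?thesis by (simp add: linear_scale)
      qed
      ultimately have "((\<lambda>s. V (x + s *\<^sub>R i) \<bullet> i) has_derivative (\<lambda>s. s * (V' x i \<bullet> i))) (at 0)" by simp
      moreover have "(*) (V' x i \<bullet> i) = (\<lambda>s. s * (V' x i \<bullet> i))" by (auto simp: fun_eq_iff)
      ultimately show ?thesis by (simp add: has_field_derivative_def)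
    qed
    have c1: "continuous_on UNIV (\<lambda>x. V x \<bullet> i)" by (intro continuous_intros Vc)
    have c2: "continuous_on UNIV (\<lambda>x. V' x i \<bullet> i)" by (intro continuous_intros V'c)
    show ?thesis
      using ibp_direction[of "\<lambda>x. V x \<bullet> i" i "\<lambda>x. V' x i \<bullet> i" K, OF der c1 c2 Kc] V0 V'0
      by auto
  qed
  define divV where "divV x = (\<Sum>i\<in>Basis. V' x i \<bullet> i)" for x
  have idiv: "integrable lborel divV" "integral\<^sup>L lborel divV = 0"
    unfolding divV_def using ibp by (auto simp: integral_sum)
  have divV_eq: "divV x = (if x \<in> U then 2 * \<phi> x * (g x \<bullet> F x) + (\<phi> x)\<^sup>2 * tr (F' x) else 0)" for x
  proof (cases "x \<in> U")
    case True
    have "divV x = (\<Sum>i\<in>Basis. 2 * \<phi> x * ((g x \<bullet> i) * (F x \<bullet> i))) + (\<Sum>i\<in>Basis. (\<phi> x)\<^sup>2 * (F' x i \<bullet> i))"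
      using True by (simp add: divV_def V'_def inner_add_left sum.distrib mult.assoc)
    also have "\<dots> = 2 * \<phi> x * (g x \<bullet> F x) + (\<phi> x)\<^sup>2 * tr (F' x)"
      by (simp add: sum_distrib_left[symmetric] sum_inner_basis tr_def)
    finally show ?thesis using True by simp
  qed (simp add: divV_def V'_def)
  define Z where "Z x = (norm (g x))\<^sup>2 + divV x" for x
  have ig: "integrable lborel (\<lambda>x. (norm (g x))\<^sup>2)"
    by (rule cont_compact_integrable[OF _ Kc]) (auto intro!: continuous_intros gc g0)
  have iZ: "integrable lborel Z" unfolding Z_def using ig idiv by auto
  have intZ: "integral\<^sup>L lborel Z = integral\<^sup>L lborel (\<lambda>x. (norm (g x))\<^sup>2)"
    unfolding Z_def using ig idiv by (simp add: integral_add)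
  have Zge: "W x * (\<phi> x)\<^sup>2 * indicator U x \<le> Z x" for x
  proof (cases "x \<in> U")
    case True
    have "0 \<le> (norm (g x + \<phi> x *\<^sub>R F x))\<^sup>2" by simp
    also have "(norm (g x + \<phi> x *\<^sub>R F x))\<^sup>2 = (norm (g x))\<^sup>2 + 2 * \<phi> x * (g x \<bullet> F x) + (\<phi> x)\<^sup>2 * (norm (F x))\<^sup>2"
      unfolding power2_norm_eq_inner by (simp add: inner_add_left inner_add_right inner_commute power2_eq_square algebra_simps)
    finally have a: "0 \<le> (norm (g x))\<^sup>2 + 2 * \<phi> x * (g x \<bullet> F x) + (\<phi> x)\<^sup>2 * (norm (F x))\<^sup>2" .
    have "(\<phi> x)\<^sup>2 * W x \<le> (\<phi> x)\<^sup>2 * (tr (F' x) - (norm (F x))\<^sup>2)"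
      using Q[OF True] by (simp add: mult_left_mono)
    then show ?thesis using True a by (simp add: Z_def divV_eq algebra_simps)
  next
    case False
    then have "x \<notin> K" using KU by blast
    then show ?thesis using False by (simp add: Z_def divV_eq g0)
  qed
  have Z0: "0 \<le> Z x" for x using Zge[of x] W0[of x] by (smt (verit) indicator_pos_le mult_nonneg_nonneg zero_le_power2)
  have "(\<integral>\<^sup>+x\<in>U. ennreal (W x * (\<phi> x)\<^sup>2) \<partial>lborel) \<le> (\<integral>\<^sup>+x. ennreal (Z x) \<partial>lborel)"
  proof (rule nn_integral_mono)
    fix x show "ennreal (W x * (\<phi> x)\<^sup>2) * indicator U x \<le> ennreal (Z x)"
      using Zge[of x] by (cases "x \<in> U") (auto simp: Z0)
  qed
  also have "\<dots> = ennreal (integral\<^sup>L lborel Z)"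
    by (rule nn_integral_eq_integral[OF iZ]) (simp add: Z0)
  also have "\<dots> = ennreal (integral\<^sup>L lborel (\<lambda>x. (norm (g x))\<^sup>2))" by (simp add: intZ)
  also have "\<dots> = (\<integral>\<^sup>+x. ennreal ((norm (g x))\<^sup>2) \<partial>lborel)"
    by (rule nn_integral_eq_integral[OF ig, symmetric]) simp
  also have "\<dots> = (\<integral>\<^sup>+x\<in>U. ennreal ((norm (g x))\<^sup>2) \<partial>lborel)"
    by (rule nn_integral_cong) (use KU g0 in \<open>auto simp: indicator_def\<close>)
  finally show ?thesis .
qed

lemma scalar_main:
  fixes r L N dv lp D p M1 C0 Dm kap A :: real
  assumes r: "r > 0" and L: "L \<ge> 2" and N: "N \<ge> 2"
    and dv: "dv > 0" and lp: "\<bar>lp\<bar> \<le> M1" and D1: "D \<ge> 1" and DDm: "D \<le> Dm"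
    and pD: "\<bar>p\<bar> \<le> D * r" and E: "\<bar>p - dv\<bar> \<le> C0 * r\<^sup>2"
    and C0: "C0 \<ge> 0"
    and kap: "kap = M1 + (N + 1) * C0 + 1" and A: "A = 2 * (N + 1) * Dm"
    and S1: "2 * A * C0 * r + (Dm * r + C0 * r\<^sup>2) * M1 \<le> 1"
    and S2: "kap * (Dm * r + C0 * r\<^sup>2 + A * r) < 1"
  defines "m \<equiv> 1 - kap * (dv + A * r)"
    and "bet \<equiv> N / 2 + 1 / (2 * L)"
  shows "m > 0"
    and "0 \<le> - (2 * (- kap * (D\<^sup>2 + (A / r) * p)) + m * lp + dv * (- kap * (lp + A * (N / r - r\<^sup>2 / r ^ 3))))
               + 2 * (bet / r\<^sup>2) * (m * p - kap * dv * (p + (A / r) * r\<^sup>2) - dv * m)"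
proof -
  have M1: "M1 \<ge> 0" using lp by linarith
  have Dm1: "Dm \<ge> 1" using D1 DDm by linarith
  have Apos: "A > 0" using A N Dm1 by simp
  have kp: "kap \<ge> 1" using kap M1 C0 N by (smt (verit) mult_nonneg_nonneg)
  have p_le: "p \<le> D * r" using pD by linarith
  have dvb: "dv \<le> Dm * r + C0 * r\<^sup>2"
  proof -
    have "dv \<le> p + C0 * r\<^sup>2" using E by linarith
    also have "p \<le> Dm * r" using p_le DDm r by (smt (verit) mult_right_mono)
    finally show ?thesis by linarith
  qed
  have "kap * (dv + A * r) < 1"
  proof -
    have "kap * (dv + A * r) \<le> kap * (Dm * r + C0 * r\<^sup>2 + A * r)"
      using dvb kp by (intro mult_left_mono) auto
    then show ?thesis using S2 by linarith
  qed
  then show mpos: "m > 0" unfolding m_def by linarith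
  have m1: "m \<le> 1" unfolding m_def using kp dv Apos r by (smt (verit) mult_nonneg_nonneg)
  have Linv: "1 / L \<le> 1 / 2" using L by (simp add: divide_le_eq)
  have bet_lo: "bet \<ge> N / 2" unfolding bet_def using L by simp
  have bet_hi: "2 * bet \<le> N + 1 / 2" unfolding bet_def using Linv by (simp add: field_simps)
  have bet0: "bet > 0" using bet_lo N by linarith
  define E0 where "E0 = p - dv"
  have pE: "p = dv + E0" unfolding E0_def by simp
  have E0b: "\<bar>E0\<bar> \<le> C0 * r\<^sup>2" using E unfolding E0_def .
  define S where "S = 2 * D\<^sup>2 + A * (N + 1 - 2 * bet) * dv / r + 2 * A * E0 / r + dv * lp - 2 * bet * dv * p / r\<^sup>2"
  define Bm where "Bm = - lp + 2 * bet * E0 / r\<^sup>2"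
  have key: "- (2 * (- kap * (D\<^sup>2 + (A / r) * p)) + m * lp + dv * (- kap * (lp + A * (N / r - r\<^sup>2 / r ^ 3))))
               + 2 * (bet / r\<^sup>2) * (m * p - kap * dv * (p + (A / r) * r\<^sup>2) - dv * m) = m * Bm + kap * S"
    unfolding S_def Bm_def pE using r by (simp add: field_simps power2_eq_square power3_eq_cube)
  have S1': "2 * bet * dv * p / r\<^sup>2 \<le> 2 * bet * D * dv / r"
  proof -
    have "2 * bet * dv * p \<le> 2 * bet * dv * (D * r)" using p_le bet0 dv by (intro mult_left_mono) auto
    then have "2 * bet * dv * p / r\<^sup>2 \<le> 2 * bet * dv * (D * r) / r\<^sup>2" using r by (simp add: divide_right_mono)
    also have "\<dots> = 2 * bet * D * dv / r" using r by (simp add: power2_eq_square field_simps)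
    finally show ?thesis .
  qed
  have S2': "A * (N + 1 - 2 * bet) * dv / r \<ge> (A / 2) * dv / r"
  proof -
    have "N + 1 - 2 * bet \<ge> 1 / 2" using bet_hi by linarith
    then have "A * (1 / 2) \<le> A * (N + 1 - 2 * bet)" using Apos by (intro mult_left_mono) auto
    then have "A / 2 \<le> A * (N + 1 - 2 * bet)" by simp
    then have "(A / 2) * dv \<le> A * (N + 1 - 2 * bet) * dv" using dv by (intro mult_right_mono) auto
    then show ?thesis by (rule divide_right_mono) (use r in auto)
  qed
  have S3': "(A / 2) * dv / r \<ge> 2 * bet * D * dv / r"
  proof -
    have "2 * bet * D \<le> (N + 1) * Dm"
    proof -
      have "2 * bet * D \<le> (N + 1) * D" using bet_hi D1 by (intro mult_right_mono) auto
      also have "\<dots> \<le> (N + 1) * Dm" using DDm N by (intro mult_left_mono) auto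
      finally show ?thesis .
    qed
    moreover have "A / 2 = (N + 1) * Dm" using A by simp
    ultimately have "2 * bet * D \<le> A / 2" by linarith
    then have "2 * bet * D * dv \<le> (A / 2) * dv" using dv by (intro mult_right_mono) auto
    then show ?thesis by (rule divide_right_mono) (use r in auto)
  qed
  have S4': "2 * A * E0 / r \<ge> - (2 * A * C0 * r)"
  proof -
    have "- E0 \<le> C0 * r\<^sup>2" using E0b by linarith
    then have "2 * A * (- E0) \<le> 2 * A * (C0 * r\<^sup>2)" using Apos by (intro mult_left_mono) auto
    then have "2 * A * (- E0) / r \<le> 2 * A * (C0 * r\<^sup>2) / r" by (rule divide_right_mono) (use r in auto)
    then show ?thesis using r by (simp add: power2_eq_square field_simps)
  qed
  have S5': "dv * lp \<ge> - ((Dm * r + C0 * r\<^sup>2) * M1)"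
  proof -
    have "\<bar>dv * lp\<bar> \<le> (Dm * r + C0 * r\<^sup>2) * M1"
      using dvb lp dv by (simp add: abs_mult mult_mono)
    then show ?thesis by linarith
  qed
  have D2: "D\<^sup>2 \<ge> 1" using D1 by (simp add: one_le_power)
  have Sge: "S \<ge> 1" unfolding S_def using S1' S2' S3' S4' S5' S1 D2 by linarith
  have Bmge: "Bm \<ge> - (M1 + (N + 1) * C0)"
  proof -
    have "\<bar>2 * bet * E0 / r\<^sup>2\<bar> \<le> (N + 1) * C0"
    proof -
      have "\<bar>2 * bet * E0\<bar> \<le> (N + 1) * (C0 * r\<^sup>2)"
      proof -
        have "\<bar>2 * bet * E0\<bar> = (2 * bet) * \<bar>E0\<bar>" using bet0 by (simp add: abs_mult)
        also have "\<dots> \<le> (N + 1) * (C0 * r\<^sup>2)" using bet_hi E0b bet0 C0 by (intro mult_mono) auto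
        finally show ?thesis .
      qed
      then show ?thesis using r by (simp add: abs_div divide_le_eq)
    qed
    then show ?thesis unfolding Bm_def using lp abs_ge_minus_self[of "2 * bet * E0 / r\<^sup>2"] abs_ge_self[of lp] by (smt (verit))
  qed
  have "m * Bm \<ge> - (M1 + (N + 1) * C0)"
  proof (cases "Bm \<ge> 0")
    case True then show ?thesis using mpos M1 C0 N by (smt (verit) mult_nonneg_nonneg)
  next
    case False
    have "m * Bm \<ge> 1 * Bm" using m1 False by (intro mult_right_mono_neg) auto
    then show ?thesis using Bmge by linarith
  qed
  moreover have "kap * S \<ge> kap * 1" using Sge kp by (intro mult_left_mono) auto
  ultimately show "0 \<le> - (2 * (- kap * (D\<^sup>2 + (A / r) * p)) + m * lp + dv * (- kap * (lp + A * (N / r - r\<^sup>2 / r ^ 3))))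
               + 2 * (bet / r\<^sup>2) * (m * p - kap * dv * (p + (A / r) * r\<^sup>2) - dv * m)"
    unfolding key using kap by linarith
qed

lemma Q_scalar:
  fixes G2 T X dl r L N :: real
  assumes r: "r \<noteq> 0" and L: "L \<noteq> 0" and dl: "dl \<noteq> 0"
  defines "bt \<equiv> N / 2 + 1 / (2 * L)"
  shows "G2 / dl\<^sup>2 - (1 / dl) * T + (1 / (2 * L\<^sup>2 * r ^ 4) - 2 * bt / r ^ 4) * r\<^sup>2 + bt / r\<^sup>2 * N
     - (G2 / dl\<^sup>2 - 2 * (bt / r\<^sup>2) * X / dl + (bt / r\<^sup>2)\<^sup>2 * r\<^sup>2)
     = (- T + 2 * (bt / r\<^sup>2) * (X - dl)) / dl + (N\<^sup>2 / 4 + 1 / (4 * L\<^sup>2)) / r\<^sup>2"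
proof -
  have e1: "(1 / (2 * L\<^sup>2 * r ^ 4) - 2 * bt / r ^ 4) * r\<^sup>2 = (1 / (2 * L\<^sup>2) - 2 * bt) / r\<^sup>2"
    using r by (simp add: field_simps power2_eq_square power4_eq_xxxx)
  have e2: "(bt / r\<^sup>2)\<^sup>2 * r\<^sup>2 = bt\<^sup>2 / r\<^sup>2" using r by (simp add: field_simps power2_eq_square)
  have e3: "N * bt - bt\<^sup>2 + 1 / (2 * L\<^sup>2) = N\<^sup>2 / 4 + 1 / (4 * L\<^sup>2)"
    unfolding bt_def using L by (simp add: field_simps power2_eq_square)
  have "G2 / dl\<^sup>2 - (1 / dl) * T + (1 / (2 * L\<^sup>2) - 2 * bt) / r\<^sup>2 + bt / r\<^sup>2 * N
     - (G2 / dl\<^sup>2 - 2 * (bt / r\<^sup>2) * X / dl + bt\<^sup>2 / r\<^sup>2)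
     = (- T + 2 * (bt / r\<^sup>2) * (X - dl)) / dl + (N * bt - bt\<^sup>2 + 1 / (2 * L\<^sup>2)) / r\<^sup>2"
    using r dl by (simp add: field_simps power2_eq_square eval_nat_numeral)
  then show ?thesis unfolding e1 e2 e3 .
qed

lemma hp_linear: "bounded_linear (hyp_proj nu)"
  unfolding hyp_proj_def by (auto intro!: bounded_linear_intros)

lemma hp_deriv: "(hyp_proj nu has_derivative hyp_proj nu) (at x)"
  by (rule bounded_linear_imp_has_derivative[OF hp_linear])

lemma hp_sym: "hyp_proj nu a \<bullet> b = a \<bullet> hyp_proj nu b"
  unfolding hyp_proj_def by (simp add: inner_diff_left inner_diff_right inner_commute algebra_simps)

lemma hp_nu: "norm nu = 1 \<Longrightarrow> hyp_proj nu a \<bullet> nu = 0"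
  unfolding hyp_proj_def by (simp add: inner_diff_left power2_norm_eq_inner[symmetric])

lemma hp_nn: "norm nu = 1 \<Longrightarrow> nu \<bullet> nu = 1"
  by (metis norm_eq_sqrt_inner real_sqrt_eq_1_iff)

lemma hp_norm2: "norm nu = 1 \<Longrightarrow> (norm x)\<^sup>2 = (norm (hyp_proj nu x))\<^sup>2 + (x \<bullet> nu)\<^sup>2"
  unfolding hyp_proj_def power2_norm_eq_inner
  by (simp add: inner_diff_left inner_diff_right inner_commute hp_nn power2_eq_square algebra_simps)

lemma hp_norm: "norm nu = 1 \<Longrightarrow> norm (hyp_proj nu x) \<le> norm x"
proof -
  assume n: "norm nu = 1"
  have "(norm (hyp_proj nu x))\<^sup>2 \<le> (norm x)\<^sup>2" using hp_norm2[OF n, of x] by simp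
  then show ?thesis by (simp add: power2_le_iff_abs_le)
qed

lemma hp_cont: "continuous_on S f \<Longrightarrow> continuous_on S (\<lambda>x. hyp_proj nu (f x))"
  unfolding hyp_proj_def by (intro continuous_intros)

locale geo =
  fixes nu :: "real^'n" and h :: "real^'n \<Rightarrow> real" and g :: "real^'n \<Rightarrow> real^'n"
    and H :: "real^'n \<Rightarrow> real^'n \<Rightarrow> real^'n"
  assumes nu1: "norm nu = 1"
    and hd: "\<And>y. (h has_derivative (\<lambda>v. g y \<bullet> v)) (at y)"
    and gd: "\<And>y. (g has_derivative H y) (at y)"
    and Hc: "\<And>v. continuous_on UNIV (\<lambda>y. H y v)"
    and h0: "h 0 = 0"
begin

abbreviation "P \<equiv> hyp_proj nu"
definition "d x = h (P x) - x \<bullet> nu"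
definition "nd x = P (g (P x)) - nu"
definition "Hd x = (\<lambda>v. P (H (P x) (P v)))"
definition "lap x = tr (Hd x)"

lemma d_deriv: "(d has_derivative (\<lambda>v. nd x \<bullet> v)) (at x)"
proof -
  have "((\<lambda>x. h (P x)) has_derivative (\<lambda>v. g (P x) \<bullet> P v)) (at x)"
    using has_derivative_compose[OF hp_deriv hd] .
  then have "(d has_derivative (\<lambda>v. g (P x) \<bullet> P v - v \<bullet> nu)) (at x)"
    unfolding d_def[abs_def] by (auto intro!: derivative_eq_intros)
  moreover have "(\<lambda>v. g (P x) \<bullet> P v - v \<bullet> nu) = (\<lambda>v. nd x \<bullet> v)"
    by (auto simp: nd_def inner_diff_left inner_diff_right hp_sym inner_commute)
  ultimately show ?thesis by simp
qed

lemma nd_deriv: "(nd has_derivative Hd x) (at x)"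
proof -
  have "((\<lambda>x. g (P x)) has_derivative (\<lambda>v. H (P x) (P v))) (at x)"
    using has_derivative_compose[OF hp_deriv gd] .
  then have "((\<lambda>x. P (g (P x))) has_derivative (\<lambda>v. P (H (P x) (P v)))) (at x)"
    using has_derivative_compose[OF _ hp_deriv] by blast
  then show ?thesis unfolding nd_def[abs_def] Hd_def by (auto intro!: derivative_eq_intros)
qed

lemma g_cont: "continuous_on UNIV g"
  using gd by (meson continuous_at_imp_continuous_on has_derivative_continuous)

lemma nd_cont: "continuous_on S nd"
  unfolding nd_def[abs_def]
  by (intro continuous_intros hp_cont continuous_on_compose2[OF g_cont]) auto

lemma Hd_cont: "continuous_on S (\<lambda>x. Hd x v)"
  unfolding Hd_def
  by (intro continuous_intros hp_cont continuous_on_compose2[OF Hc]) auto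

lemma lap_cont: "continuous_on S lap"
  unfolding lap_def tr_def by (intro continuous_intros Hd_cont)

lemma d_cont: "continuous_on S d"
  using d_deriv by (meson continuous_at_imp_continuous_on has_derivative_continuous)

lemma nd_norm: "norm (nd x) \<ge> 1"
proof -
  have "(norm (nd x))\<^sup>2 = (norm (P (g (P x))))\<^sup>2 + 1"
    unfolding nd_def power2_norm_eq_inner
    using hp_nu[OF nu1, of "g (P x)"] hp_nn[OF nu1]
    by (simp add: inner_diff_left inner_diff_right inner_commute)
  then have "1\<^sup>2 \<le> (norm (nd x))\<^sup>2" by simp
  then show ?thesis by (rule power2_le_imp_le) simp
qed

lemma H_linear: "linear (H y)"
  using gd[of y] has_derivative_linear by blast

lemma H_bound: "\<exists>M\<ge>0. \<forall>y\<in>cball 0 1. \<forall>w. norm (H y w) \<le> M * norm w"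
proof -
  define S where "S y = (\<Sum>i\<in>Basis. norm (H y i))" for y
  have Sc: "continuous_on (cball 0 1) S" unfolding S_def
    by (intro continuous_intros continuous_on_subset[OF Hc]) auto
  have "compact (S ` cball 0 1)" by (rule compact_continuous_image[OF Sc]) simp
  then obtain M0 where M0: "\<forall>y\<in>cball 0 1. norm (S y) \<le> M0"
    using compact_imp_bounded bounded_iff by (metis imageI)
  have bnd: "norm (H y w) \<le> max M0 0 * norm w" if y: "y \<in> cball 0 1" for y w
  proof -
    have "H y w = H y (\<Sum>i\<in>Basis. (w \<bullet> i) *\<^sub>R i)" by (simp add: euclidean_representation)
    also have "\<dots> = (\<Sum>i\<in>Basis. (w \<bullet> i) *\<^sub>R H y i)"
      using H_linear[of y] by (simp add: linear_sum linear_scale)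
    finally have "norm (H y w) \<le> (\<Sum>i\<in>Basis. norm ((w \<bullet> i) *\<^sub>R H y i))"
      using norm_sum by metis
    also have "\<dots> \<le> (\<Sum>i\<in>Basis. norm w * norm (H y i))"
      by (intro sum_mono) (simp add: Basis_le_norm mult_right_mono)
    also have "\<dots> = norm w * S y" by (simp add: S_def sum_distrib_left)
    also have "\<dots> \<le> norm w * max M0 0"
    proof -
      have "S y \<le> M0" using M0 y by (smt (verit) real_norm_def)
      then show ?thesis by (intro mult_left_mono) auto
    qed
    finally show ?thesis by (simp add: mult.commute)
  qed
  show ?thesis by (rule exI[of _ "max M0 0"]) (use bnd in auto)
qed

lemma taylor_bound:
  assumes M: "M \<ge> 0" "\<forall>y\<in>cball 0 1. \<forall>w. norm (H y w) \<le> M * norm w"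
    and z: "norm z \<le> 1"
  shows "\<bar>g z \<bullet> z - h z\<bar> \<le> M * (norm z)\<^sup>2"
proof (cases "z = 0")
  case True then show ?thesis using h0 by simp
next
  case False
  define \<psi> where "\<psi> t = t * (g (t *\<^sub>R z) \<bullet> z) - h (t *\<^sub>R z)" for t :: real
  have der: "(\<psi> has_real_derivative (t * (H (t *\<^sub>R z) z \<bullet> z))) (at t)" for t
  proof -
    have l: "((\<lambda>t::real. t *\<^sub>R z) has_derivative (\<lambda>s. s *\<^sub>R z)) (at t)"
      by (auto intro!: derivative_eq_intros)
    have dh: "((\<lambda>t. h (t *\<^sub>R z)) has_derivative (\<lambda>s. g (t *\<^sub>R z) \<bullet> (s *\<^sub>R z))) (at t)"
      using has_derivative_compose[OF l hd] .
    have dg: "((\<lambda>t. g (t *\<^sub>R z)) has_derivative (\<lambda>s. H (t *\<^sub>R z) (s *\<^sub>R z))) (at t)"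
      using has_derivative_compose[OF l gd] .
    have "(\<psi> has_derivative (\<lambda>s. s * (g (t *\<^sub>R z) \<bullet> z) + t * (H (t *\<^sub>R z) (s *\<^sub>R z) \<bullet> z) - g (t *\<^sub>R z) \<bullet> (s *\<^sub>R z))) (at t)"
      unfolding \<psi>_def[abs_def] using dh dg by (auto intro!: derivative_eq_intros)
    moreover have "(\<lambda>s. s * (g (t *\<^sub>R z) \<bullet> z) + t * (H (t *\<^sub>R z) (s *\<^sub>R z) \<bullet> z) - g (t *\<^sub>R z) \<bullet> (s *\<^sub>R z))
        = (*) (t * (H (t *\<^sub>R z) z \<bullet> z))"
      using H_linear[of "t *\<^sub>R z"] by (auto simp: fun_eq_iff linear_scale)
    ultimately show ?thesis by (simp add: has_field_derivative_def)
  qed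
  obtain \<xi> where \<xi>: "0 < \<xi>" "\<xi> < 1" and eq: "\<psi> 1 - \<psi> 0 = (1 - 0) * (\<xi> * (H (\<xi> *\<^sub>R z) z \<bullet> z))"
    using MVT2[of 0 1 \<psi> "\<lambda>t. t * (H (t *\<^sub>R z) z \<bullet> z)"] der by auto
  have "\<psi> 1 - \<psi> 0 = g z \<bullet> z - h z" by (simp add: \<psi>_def h0)
  then have "\<bar>g z \<bullet> z - h z\<bar> = \<bar>\<xi> * (H (\<xi> *\<^sub>R z) z \<bullet> z)\<bar>" using eq by simp
  also have "\<dots> = \<xi> * \<bar>H (\<xi> *\<^sub>R z) z \<bullet> z\<bar>" using \<xi> by (simp add: abs_mult)
  also have "\<dots> \<le> 1 * (norm (H (\<xi> *\<^sub>R z) z) * norm z)"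
    using \<xi> Cauchy_Schwarz_ineq2[of "H (\<xi> *\<^sub>R z) z" z] by (intro mult_mono) auto
  also have "\<dots> \<le> (M * norm z) * norm z"
  proof -
    have "\<xi> *\<^sub>R z \<in> cball 0 1" using \<xi> z by (simp add: mult_le_one)
    then have "norm (H (\<xi> *\<^sub>R z) z) \<le> M * norm z" using M by blast
    then show ?thesis by (simp add: mult_right_mono)
  qed
  finally show ?thesis by (simp add: power2_eq_square mult.assoc)
qed

lemma E0_identity: "nd x \<bullet> x - d x = g (P x) \<bullet> P x - h (P x)"
  unfolding nd_def d_def by (simp add: inner_diff_left inner_diff_right hp_sym inner_commute)

lemma E0_bound: "\<exists>C0\<ge>0. \<forall>x. norm x \<le> 1 \<longrightarrow> \<bar>nd x \<bullet> x - d x\<bar> \<le> C0 * (norm x)\<^sup>2"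
proof -
  obtain M where M: "M \<ge> 0" "\<forall>y\<in>cball 0 1. \<forall>w. norm (H y w) \<le> M * norm w" using H_bound by blast
  have "\<bar>nd x \<bullet> x - d x\<bar> \<le> M * (norm x)\<^sup>2" if "norm x \<le> 1" for x
  proof -
    have pn: "norm (P x) \<le> norm x" by (rule hp_norm[OF nu1])
    have "\<bar>nd x \<bullet> x - d x\<bar> \<le> M * (norm (P x))\<^sup>2"
      unfolding E0_identity by (rule taylor_bound[OF M]) (use pn that in linarith)
    also have "\<dots> \<le> M * (norm x)\<^sup>2" using pn M(1) by (intro mult_left_mono power_mono) auto
    finally show ?thesis .
  qed
  then show ?thesis using M(1) by blast
qed

end

lemma rh_deriv:
  fixes x :: "'a::real_inner"
  assumes "x \<noteq> 0"
  shows "(norm has_derivative (\<lambda>v. (x \<bullet> v) / norm x)) (at x within S)"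
proof -
  have "(norm has_derivative (\<lambda>h. h \<bullet> sgn x)) (at x)" using has_derivative_norm[OF assms] by simp
  moreover have "(\<lambda>h. h \<bullet> sgn x) = (\<lambda>v. (x \<bullet> v) / norm x)"
    by (auto simp: fun_eq_iff sgn_div_norm inner_commute divide_inverse mult.commute)
  ultimately show ?thesis using has_derivative_at_withinI by fastforce
qed

locale fieldloc = geo nu h g H for nu :: "real^'n" and h g H +
  fixes kap A :: real
begin

definition "NN = real CARD('n)"
definition "m x = 1 - kap * (d x + A * norm x)"
definition "gm x = (- kap) *\<^sub>R (nd x + (A / norm x) *\<^sub>R x)"
definition "Hm x = (\<lambda>v. (- kap) *\<^sub>R (Hd x v + A *\<^sub>R ((1 / norm x) *\<^sub>R v - ((x \<bullet> v) / norm x ^ 3) *\<^sub>R x)))"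
definition "del x = d x * m x"
definition "gdel x = m x *\<^sub>R nd x + d x *\<^sub>R gm x"
definition "Hdel x = (\<lambda>v. (gm x \<bullet> v) *\<^sub>R nd x + m x *\<^sub>R Hd x v + (nd x \<bullet> v) *\<^sub>R gm x + d x *\<^sub>R Hm x v)"
definition "Lg x = - ln (norm x)"
definition "bet x = NN / 2 + 1 / (2 * Lg x)"
definition "bb x = bet x / (norm x)\<^sup>2"
definition "gb x = (1 / (2 * (Lg x)\<^sup>2 * norm x ^ 4) - 2 * bet x / norm x ^ 4) *\<^sub>R x"
definition "F x = (- (1 / del x)) *\<^sub>R gdel x + bb x *\<^sub>R x"
definition "F' x = (\<lambda>v. ((gdel x \<bullet> v) / (del x)\<^sup>2) *\<^sub>R gdel x - (1 / del x) *\<^sub>R Hdel x v + (gb x \<bullet> v) *\<^sub>R x + bb x *\<^sub>R v)"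

lemma d_deriv_w: "(d has_derivative (\<lambda>v. nd x \<bullet> v)) (at x within S)"
  using d_deriv has_derivative_at_withinI by blast
lemma nd_deriv_w: "(nd has_derivative Hd x) (at x within S)"
  using nd_deriv has_derivative_at_withinI by blast

lemma m_deriv: "x \<noteq> 0 \<Longrightarrow> (m has_derivative (\<lambda>v. gm x \<bullet> v)) (at x)"
  unfolding m_def[abs_def]
  by (rule has_derivative_eq_rhs, (rule derivative_intros d_deriv_w rh_deriv)+)
     (auto simp: fun_eq_iff gm_def inner_add_left algebra_simps)

lemma gm_deriv: "x \<noteq> 0 \<Longrightarrow> (gm has_derivative Hm x) (at x)"
  unfolding gm_def[abs_def]
  by (rule has_derivative_eq_rhs, (rule derivative_intros nd_deriv_w rh_deriv)+)
     (auto simp: fun_eq_iff Hm_def algebra_simps divide_simps power3_eq_cube)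

lemma del_deriv: "x \<noteq> 0 \<Longrightarrow> (del has_derivative (\<lambda>v. gdel x \<bullet> v)) (at x)"
  unfolding del_def[abs_def]
  by (rule has_derivative_eq_rhs, (rule derivative_intros d_deriv_w m_deriv[THEN has_derivative_at_withinI])+)
     (auto simp: fun_eq_iff gdel_def inner_add_left algebra_simps)

lemma gdel_deriv: "x \<noteq> 0 \<Longrightarrow> (gdel has_derivative Hdel x) (at x)"
  unfolding gdel_def[abs_def]
  by (rule has_derivative_eq_rhs, (rule derivative_intros d_deriv_w nd_deriv_w m_deriv[THEN has_derivative_at_withinI] gm_deriv[THEN has_derivative_at_withinI] | assumption)+)
     (auto simp: fun_eq_iff Hdel_def algebra_simps)

lemma Lg_deriv: "x \<noteq> 0 \<Longrightarrow> (Lg has_derivative (\<lambda>v. - (x \<bullet> v) / (norm x)\<^sup>2)) (at x within S)"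
  unfolding Lg_def[abs_def]
  by (rule has_derivative_eq_rhs, (rule derivative_intros rh_deriv | assumption | simp)+)
     (auto simp: fun_eq_iff power2_eq_square divide_inverse)

lemma bet_deriv:
  assumes x: "x \<noteq> 0" and L: "Lg x \<noteq> 0"
  shows "(bet has_derivative (\<lambda>v. (x \<bullet> v) / (2 * (Lg x)\<^sup>2 * (norm x)\<^sup>2))) (at x within S)"
proof -
  have "((\<lambda>x. NN / 2 + inverse (2 * Lg x)) has_derivative
     (\<lambda>v. 0 + - (inverse (2 * Lg x) * (2 * (- (x \<bullet> v) / (norm x)\<^sup>2)) * inverse (2 * Lg x)))) (at x within S)"
    by (intro derivative_intros Lg_deriv x) (use L in simp)
  moreover have "(\<lambda>v. 0 + - (inverse (2 * Lg x) * (2 * (- (x \<bullet> v) / (norm x)\<^sup>2)) * inverse (2 * Lg x)))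
     = (\<lambda>v. (x \<bullet> v) / (2 * (Lg x)\<^sup>2 * (norm x)\<^sup>2))"
    using L by (auto simp: fun_eq_iff field_simps power2_eq_square)
  ultimately show ?thesis unfolding bet_def[abs_def] by (simp add: inverse_eq_divide)
qed

lemma nsq_deriv: "((\<lambda>x. (norm x)\<^sup>2) has_derivative (\<lambda>v. 2 * (x \<bullet> v))) (at x within S)"
proof -
  have "((\<lambda>x. x \<bullet> x) has_derivative (\<lambda>v. x \<bullet> v + v \<bullet> x)) (at x within S)"
    by (intro derivative_eq_intros) auto
  then show ?thesis by (simp add: power2_norm_eq_inner inner_commute)
qed

lemma bb_deriv:
  assumes x: "x \<noteq> 0" and L: "Lg x \<noteq> 0"
  shows "(bb has_derivative (\<lambda>v. gb x \<bullet> v)) (at x within S)"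
proof -
  have "((\<lambda>x. bet x * inverse ((norm x)\<^sup>2)) has_derivative
     (\<lambda>v. bet x * (- (inverse ((norm x)\<^sup>2) * (2 * (x \<bullet> v)) * inverse ((norm x)\<^sup>2)))
          + (x \<bullet> v) / (2 * (Lg x)\<^sup>2 * (norm x)\<^sup>2) * inverse ((norm x)\<^sup>2))) (at x within S)"
    by (intro derivative_intros bet_deriv nsq_deriv x L) (use x in simp)
  moreover have "(\<lambda>v. bet x * (- (inverse ((norm x)\<^sup>2) * (2 * (x \<bullet> v)) * inverse ((norm x)\<^sup>2)))
          + (x \<bullet> v) / (2 * (Lg x)\<^sup>2 * (norm x)\<^sup>2) * inverse ((norm x)\<^sup>2)) = (\<lambda>v. gb x \<bullet> v)"
    using x L by (auto simp: fun_eq_iff gb_def field_simps power2_eq_square power4_eq_xxxx)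
  ultimately show ?thesis unfolding bb_def[abs_def] by (simp add: inverse_eq_divide)
qed

lemma F_deriv:
  assumes x: "x \<noteq> 0" and L: "Lg x \<noteq> 0" and D: "del x \<noteq> 0"
  shows "(F has_derivative F' x) (at x)"
proof -
  have "((\<lambda>x. (- inverse (del x)) *\<^sub>R gdel x + bb x *\<^sub>R x) has_derivative
    (\<lambda>v. (- inverse (del x)) *\<^sub>R Hdel x v + (- (- (inverse (del x) * (gdel x \<bullet> v) * inverse (del x)))) *\<^sub>R gdel x
         + (bb x *\<^sub>R v + (gb x \<bullet> v) *\<^sub>R x))) (at x)"
    by (intro derivative_intros del_deriv[THEN has_derivative_at_withinI] gdel_deriv[THEN has_derivative_at_withinI] bb_deriv x L D)
  moreover have "(\<lambda>v. (- inverse (del x)) *\<^sub>R Hdel x v + (- (- (inverse (del x) * (gdel x \<bullet> v) * inverse (del x)))) *\<^sub>R gdel x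
         + (bb x *\<^sub>R v + (gb x \<bullet> v) *\<^sub>R x)) = F' x"
    unfolding F'_def by (auto simp: fun_eq_iff power2_eq_square divide_inverse algebra_simps)
  ultimately show ?thesis unfolding F_def[abs_def] by (simp add: inverse_eq_divide)
qed

lemma tr_rank1': "tr (\<lambda>v. ((a \<bullet> v) / c) *\<^sub>R w) = (a \<bullet> w) / c"
  using tr_rank1[of "a /\<^sub>R c" w] by (simp add: divide_inverse mult.commute)

lemma tr_Hm: "tr (Hm x) = - kap * (lap x + A * (NN / norm x - (x \<bullet> x) / norm x ^ 3))"
  unfolding Hm_def by (simp add: tr_minus tr_scale tr_add tr_diff tr_rank1' tr_id lap_def NN_def)

lemma tr_Hdel: "tr (Hdel x) = gm x \<bullet> nd x + m x * lap x + nd x \<bullet> gm x + d x * tr (Hm x)"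
  unfolding Hdel_def by (simp add: tr_scale tr_add tr_rank1 lap_def)

lemma tr_F': "tr (F' x) = (gdel x \<bullet> gdel x) / (del x)\<^sup>2 - (1 / del x) * tr (Hdel x) + gb x \<bullet> x + bb x * NN"
  unfolding F'_def by (simp add: tr_scale tr_add tr_diff tr_rank1 tr_rank1' tr_id NN_def)

lemma normF: "(norm (F x))\<^sup>2 = (gdel x \<bullet> gdel x) / (del x)\<^sup>2 - 2 * bb x * (gdel x \<bullet> x) / del x + (bb x)\<^sup>2 * (x \<bullet> x)"
  unfolding F_def power2_norm_eq_inner
  by (simp add: inner_add_left inner_add_right inner_commute power2_eq_square divide_inverse algebra_simps)

lemma Q_formula:
  assumes x: "x \<noteq> 0" and L: "Lg x \<noteq> 0" and D: "del x \<noteq> 0"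
  shows "tr (F' x) - (norm (F x))\<^sup>2 = (- tr (Hdel x) + 2 * bb x * (gdel x \<bullet> x - del x)) / del x
          + (NN\<^sup>2 / 4 + 1 / (4 * (Lg x)\<^sup>2)) / (norm x)\<^sup>2"
proof -
  have xx: "x \<bullet> x = (norm x)\<^sup>2" by (simp add: power2_norm_eq_inner)
  have n: "norm x \<noteq> 0" using x by simp
  have gbx: "gb x \<bullet> x = (1 / (2 * (Lg x)\<^sup>2 * norm x ^ 4) - 2 * bet x / norm x ^ 4) * (norm x)\<^sup>2"
    unfolding gb_def by (simp add: xx)
  show ?thesis
    unfolding tr_F' normF xx gbx bb_def
    using Q_scalar[OF n L D, of "gdel x \<bullet> gdel x" "tr (Hdel x)" NN "gdel x \<bullet> x"]
    by (simp add: bet_def)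
qed

lemma F'_cont:
  assumes U: "\<And>x. x \<in> U \<Longrightarrow> x \<noteq> 0 \<and> del x \<noteq> 0 \<and> Lg x \<noteq> 0"
  shows "continuous_on U (\<lambda>x. F' x v)"
proof -
  have n0: "\<And>x. x \<in> U \<Longrightarrow> norm x \<noteq> 0" "\<And>x. x \<in> U \<Longrightarrow> norm x > 0" using U by auto
  have cm: "continuous_on U m" unfolding m_def[abs_def] by (intro continuous_intros d_cont)
  have cgm: "continuous_on U gm" unfolding gm_def[abs_def] by (intro continuous_intros nd_cont) (use n0 in auto)
  have cHm: "continuous_on U (\<lambda>x. Hm x w)" for w
    unfolding Hm_def by (intro continuous_intros Hd_cont) (use n0 in auto)
  have cdel: "continuous_on U del" unfolding del_def[abs_def] by (intro continuous_intros d_cont cm)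
  have cgdel: "continuous_on U gdel" unfolding gdel_def[abs_def] by (intro continuous_intros d_cont cm nd_cont cgm)
  have cHdel: "continuous_on U (\<lambda>x. Hdel x w)" for w
    unfolding Hdel_def by (intro continuous_intros d_cont cm nd_cont cgm cHm Hd_cont)
  have cLg: "continuous_on U Lg" unfolding Lg_def[abs_def] by (intro continuous_intros) (use n0 in auto)
  have cbet: "continuous_on U bet" unfolding bet_def[abs_def] by (intro continuous_intros cLg) (use U in auto)
  have cbb: "continuous_on U bb" unfolding bb_def[abs_def] by (intro continuous_intros cbet) (use n0 in auto)
  have cgb: "continuous_on U gb" unfolding gb_def[abs_def] by (intro continuous_intros cLg cbet) (use n0 U in auto)
  show ?thesis unfolding F'_def
    by (intro continuous_intros cgdel cdel cHdel cgb cbb) (use U in auto)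
qed

lemma Q_ge:
  fixes x :: "real^'n" and M1 C0 Dm :: real
  assumes r: "x \<noteq> 0" and L: "Lg x \<ge> 2" and N: "NN \<ge> 2"
    and dv: "d x > 0" and lp: "\<bar>lap x\<bar> \<le> M1" and DDm: "norm (nd x) \<le> Dm"
    and E: "\<bar>nd x \<bullet> x - d x\<bar> \<le> C0 * (norm x)\<^sup>2"
    and C0: "C0 \<ge> 0"
    and kap: "kap = M1 + (NN + 1) * C0 + 1" and A: "A = 2 * (NN + 1) * Dm"
    and S1: "2 * A * C0 * norm x + (Dm * norm x + C0 * (norm x)\<^sup>2) * M1 \<le> 1"
    and S2: "kap * (Dm * norm x + C0 * (norm x)\<^sup>2 + A * norm x) < 1"
  shows "del x > 0"
    and "tr (F' x) - (norm (F x))\<^sup>2 \<ge> NN\<^sup>2 / 4 / (norm x)\<^sup>2 + 1 / 4 / ((norm x)\<^sup>2 * (ln (norm x))\<^sup>2)"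
proof -
  have rpos: "norm x > 0" using r by simp
  have pD: "\<bar>nd x \<bullet> x\<bar> \<le> norm (nd x) * norm x" by (rule Cauchy_Schwarz_ineq2)
  note sc = scalar_main[OF rpos L N dv lp nd_norm DDm pD E C0 kap A S1 S2]
  have mx: "m x = 1 - kap * (d x + A * norm x)" by (simp add: m_def)
  have mpos: "m x > 0" using sc(1) mx by simp
  show dpos: "del x > 0" unfolding del_def using dv mpos by simp
  have xx: "x \<bullet> x = (norm x)\<^sup>2" by (simp add: power2_norm_eq_inner)
  have gmnd: "gm x \<bullet> nd x = - kap * ((norm (nd x))\<^sup>2 + (A / norm x) * (nd x \<bullet> x))"
    unfolding gm_def by (simp add: inner_add_left inner_add_right power2_norm_eq_inner inner_commute)
  have ndgm: "nd x \<bullet> gm x = gm x \<bullet> nd x" by (simp add: inner_commute)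
  have gmx: "gm x \<bullet> x = - kap * (nd x \<bullet> x + (A / norm x) * (norm x)\<^sup>2)"
    unfolding gm_def by (simp add: inner_add_left xx)
  have T: "tr (Hdel x) = 2 * (- kap * ((norm (nd x))\<^sup>2 + (A / norm x) * (nd x \<bullet> x))) + m x * lap x
       + d x * (- kap * (lap x + A * (NN / norm x - (norm x)\<^sup>2 / norm x ^ 3)))"
    unfolding tr_Hdel tr_Hm ndgm gmnd xx by simp
  have X: "gdel x \<bullet> x - del x = m x * (nd x \<bullet> x) - kap * d x * (nd x \<bullet> x + (A / norm x) * (norm x)\<^sup>2) - d x * m x"
    unfolding gdel_def del_def by (simp add: inner_add_left gmx)
  have B: "0 \<le> - tr (Hdel x) + 2 * bb x * (gdel x \<bullet> x - del x)"
    using sc(2) unfolding T X bb_def mx[symmetric] by (simp add: bet_def mult.assoc)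
  have L0: "Lg x \<noteq> 0" using L by simp
  have "tr (F' x) - (norm (F x))\<^sup>2 = (- tr (Hdel x) + 2 * bb x * (gdel x \<bullet> x - del x)) / del x
          + (NN\<^sup>2 / 4 + 1 / (4 * (Lg x)\<^sup>2)) / (norm x)\<^sup>2"
    by (rule Q_formula[OF r L0]) (use dpos in simp)
  also have "\<dots> \<ge> (NN\<^sup>2 / 4 + 1 / (4 * (Lg x)\<^sup>2)) / (norm x)\<^sup>2"
    using B dpos by simp
  finally show "tr (F' x) - (norm (F x))\<^sup>2 \<ge> NN\<^sup>2 / 4 / (norm x)\<^sup>2 + 1 / 4 / ((norm x)\<^sup>2 * (ln (norm x))\<^sup>2)"
    by (simp add: Lg_def add_divide_distrib power2_eq_square mult.commute mult.left_commute)
qed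

end

lemma h0_from_frontier:
  fixes \<Omega> :: "(real^'n) set" and nu :: "real^'n" and h :: "real^'n \<Rightarrow> real"
  assumes op: "open \<Omega>" and fr: "0 \<in> frontier \<Omega>" and \<rho>: "\<rho> > 0"
    and rep: "\<Omega> \<inter> ball 0 \<rho> = {x \<in> ball 0 \<rho>. x \<bullet> nu < h (hyp_proj nu x)}"
    and hc: "continuous_on UNIV h"
  shows "h 0 = 0" and "0 \<notin> \<Omega>"
proof -
  have n0: "0 \<notin> \<Omega>" using fr op by (simp add: frontier_def interior_open)
  show "0 \<notin> \<Omega>" by (rule n0)
  have cl: "0 \<in> closure \<Omega>" using fr by (simp add: frontier_def)
  have P0: "hyp_proj nu 0 = 0" by (simp add: hyp_proj_def)
  show "h 0 = 0"
  proof (rule ccontr)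
    assume "h 0 \<noteq> 0"
    then consider "h 0 > 0" | "h 0 < 0" by linarith
    then show False
    proof cases
      case 1
      then have "0 \<in> \<Omega> \<inter> ball 0 \<rho>" using rep \<rho> P0 by auto
      then show False using n0 by blast
    next
      case 2
      define f where "f x = h (hyp_proj nu x) - x \<bullet> nu" for x
      have fc: "continuous_on UNIV f" unfolding f_def
        by (intro continuous_intros hp_cont continuous_on_compose2[OF hc]) auto
      have f0: "f 0 < 0" using 2 P0 by (simp add: f_def)
      have "isCont f 0" using fc by (simp add: continuous_on_eq_continuous_at)
      then obtain e where e: "e > 0" "\<And>y. dist y 0 < e \<Longrightarrow> dist (f y) (f 0) < - f 0"
        unfolding continuous_at_eps_delta using f0 by (metis neg_0_less_iff_less)
      obtain y where y: "y \<in> \<Omega>" "dist y 0 < min e \<rho>"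
        using cl unfolding closure_approachable using e(1) \<rho> by (metis min_less_iff_conj)
      have "y \<in> \<Omega> \<inter> ball 0 \<rho>" using y by (auto simp: dist_commute)
      then have "f y > 0" using rep by (auto simp: f_def)
      moreover have "f y < 0" using e(2)[of y] y(2) by (auto simp: dist_real_def)
      ultimately show False by linarith
    qed
  qed
qed

lemma bound_on_cball:
  fixes f :: "real^'n \<Rightarrow> real"
  assumes "continuous_on (cball 0 1) f"
  shows "\<exists>M\<ge>1. \<forall>x\<in>cball 0 1. \<bar>f x\<bar> \<le> M"
proof -
  have "compact (f ` cball 0 1)" by (rule compact_continuous_image[OF assms]) simp
  then obtain B where "\<forall>y\<in>f ` cball 0 1. norm y \<le> B" using compact_imp_bounded bounded_iff by metis
  then have "\<forall>x\<in>cball 0 1. \<bar>f x\<bar> \<le> max B 1" by force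
  then show ?thesis by (intro exI[of _ "max B 1"]) auto
qed

theorem corollary3p2:
  fixes \<Omega> :: "(real^'n) set"
  assumes "CARD('n) \<ge> 2"
    and "lipschitz_domain \<Omega>"
    and "0 \<in> frontier \<Omega>"
    and "C2_boundary_near \<Omega> 0"
  shows "\<exists>c > 0. \<exists>r0 > 0. r0 < 1 \<and> (\<forall>r. 0 < r \<and> r < r0 \<longrightarrow>
           (\<forall>u G. H10 (\<Omega> \<inter> ball 0 r) u G \<longrightarrow>
              (\<integral>\<^sup>+x\<in>\<Omega> \<inter> ball 0 r. ennreal ((norm (G x))\<^sup>2) \<partial>lborel)
              \<ge> ennreal ((real (CARD('n)))\<^sup>2 / 4) *
                   (\<integral>\<^sup>+x\<in>\<Omega> \<inter> ball 0 r. ennreal ((u x)\<^sup>2 / (norm x)\<^sup>2) \<partial>lborel)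
                + ennreal c *
                   (\<integral>\<^sup>+x\<in>\<Omega> \<inter> ball 0 r. ennreal ((u x)\<^sup>2 / ((norm x)\<^sup>2 * (ln (norm x))\<^sup>2)) \<partial>lborel)))"
proof -
  from assms(2) have op\<Omega>: "open \<Omega>" by (simp add: lipschitz_domain_def)
  from assms(4) obtain \<rho> nu h where \<rho>: "\<rho> > 0" and nu1: "norm nu = 1" and C2: "C2_fun h"
     and rep: "\<Omega> \<inter> ball 0 \<rho> = {x \<in> ball 0 \<rho>. x \<bullet> nu < h (hyp_proj nu x)}"
     unfolding C2_boundary_near_def by blast
  from C2 obtain g H where hd: "\<And>y. (h has_derivative (\<lambda>v. g y \<bullet> v)) (at y)"
    and gd: "\<And>y. (g has_derivative H y) (at y)" and Hc: "\<And>v. continuous_on UNIV (\<lambda>y. H y v)"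
     unfolding C2_fun_def by blast
  have hc: "continuous_on UNIV h" using hd by (meson continuous_at_imp_continuous_on has_derivative_continuous)
  have h0: "h 0 = 0" and n0: "0 \<notin> \<Omega>" using h0_from_frontier[OF op\<Omega> assms(3) \<rho> rep hc] by auto
  interpret geo nu h g H by unfold_locales (use nu1 hd gd Hc h0 in auto)
  obtain C0 where C0: "C0 \<ge> 0" "\<And>x. norm x \<le> 1 \<Longrightarrow> \<bar>nd x \<bullet> x - d x\<bar> \<le> C0 * (norm x)\<^sup>2"
    using E0_bound by blast
  obtain M1 where M1: "M1 \<ge> 1" "\<And>x. x \<in> cball 0 1 \<Longrightarrow> \<bar>lap x\<bar> \<le> M1"
    using bound_on_cball[OF lap_cont] by blast
  obtain Dm where Dm: "Dm \<ge> 1" "\<And>x. x \<in> cball 0 1 \<Longrightarrow> \<bar>norm (nd x)\<bar> \<le> Dm"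
    using bound_on_cball[of "\<lambda>x. norm (nd x)"] nd_cont by (metis continuous_on_norm)
  define NN' where "NN' = real CARD('n)"
  have NN2: "NN' \<ge> 2" using assms(1) by (simp add: NN'_def)
  define kap where "kap = M1 + (NN' + 1) * C0 + 1"
  define A where "A = 2 * (NN' + 1) * Dm"
  interpret fl: fieldloc nu h g H kap A by unfold_locales
  have NNeq: "fl.NN = NN'" by (simp add: fl.NN_def NN'_def)
  have kap1: "kap \<ge> 1" unfolding kap_def using M1 C0 NN2 by (smt (verit) mult_nonneg_nonneg)
  have A0: "A \<ge> 0" unfolding A_def using Dm NN2 by simp
  define Z1 where "Z1 = 2 * A * C0 + (Dm + C0) * M1"
  define Z2 where "Z2 = kap * (Dm + C0 + A)"
  have Z1: "Z1 \<ge> 0" unfolding Z1_def using A0 C0 Dm M1 by simp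
  have Z2: "Z2 \<ge> 0" unfolding Z2_def using kap1 A0 C0 Dm by simp
  define r0 where "r0 = min (min \<rho> (exp (-2))) (min (1 / (Z1 + 1)) (1 / (Z2 + 1)))"
  have r0pos: "r0 > 0" unfolding r0_def using \<rho> Z1 Z2 by simp
  have e2: "exp (-2::real) < 1" by simp
  have r01: "r0 < 1" unfolding r0_def using e2 by linarith
  define W where "W x = NN'\<^sup>2 / 4 / (norm x)\<^sup>2 + 1 / 4 / ((norm x)\<^sup>2 * (ln (norm x))\<^sup>2)" for x :: "real^'n"
  have Wm: "W \<in> borel_measurable lborel" unfolding W_def by measurable
  have W0: "W x \<ge> 0" for x unfolding W_def by simp
  have main: "(\<integral>\<^sup>+x\<in>\<Omega> \<inter> ball 0 r. ennreal ((norm (G x))\<^sup>2) \<partial>lborel)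
              \<ge> ennreal ((real (CARD('n)))\<^sup>2 / 4) *
                   (\<integral>\<^sup>+x\<in>\<Omega> \<inter> ball 0 r. ennreal ((u x)\<^sup>2 / (norm x)\<^sup>2) \<partial>lborel)
                + ennreal (1/4) *
                   (\<integral>\<^sup>+x\<in>\<Omega> \<inter> ball 0 r. ennreal ((u x)\<^sup>2 / ((norm x)\<^sup>2 * (ln (norm x))\<^sup>2)) \<partial>lborel)"
    if r: "0 < r" "r < r0" and HU: "H10 (\<Omega> \<inter> ball 0 r) u G" for r u G
  proof -
    define U where "U = \<Omega> \<inter> ball 0 r"
    have Uo: "open U" unfolding U_def using op\<Omega> by auto
    have ptwise: "x \<noteq> 0 \<and> fl.del x > 0 \<and> fl.Lg x \<ge> 2 \<and> tr (fl.F' x) - (norm (fl.F x))\<^sup>2 \<ge> W x" if xU: "x \<in> U" for x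
    proof -
      have x0: "x \<noteq> 0" using xU n0 unfolding U_def by auto
      have nr: "norm x < r0" using xU r unfolding U_def by auto
      have nrho: "norm x < \<rho>" using nr unfolding r0_def by linarith
      have "x \<in> \<Omega> \<inter> ball 0 \<rho>" using xU nrho unfolding U_def by auto
      then have dpos: "d x > 0" using rep by (auto simp: d_def)
      have n1: "norm x \<le> 1" using nr r01 by linarith
      have xc: "x \<in> cball 0 1" using n1 by simp
      have npos: "norm x > 0" using x0 by simp
      have ne2: "norm x < exp (-2)" using nr unfolding r0_def by linarith
      have L2: "fl.Lg x \<ge> 2"
      proof -
        have "ln (norm x) < ln (exp (-2))" using ne2 npos by (subst ln_less_cancel_iff) auto
        then show ?thesis unfolding fl.Lg_def by simp
      qed
      have sq: "(norm x)\<^sup>2 \<le> norm x" using n1 npos by (simp add: power2_eq_square mult_left_le_one_le)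
      have S1: "2 * A * C0 * norm x + (Dm * norm x + C0 * (norm x)\<^sup>2) * M1 \<le> 1"
      proof -
        have "C0 * (norm x)\<^sup>2 \<le> C0 * norm x" using sq C0(1) by (rule mult_left_mono)
        then have "(Dm * norm x + C0 * (norm x)\<^sup>2) * M1 \<le> (Dm * norm x + C0 * norm x) * M1"
          using M1(1) by (intro mult_right_mono) auto
        then have "2 * A * C0 * norm x + (Dm * norm x + C0 * (norm x)\<^sup>2) * M1 \<le> Z1 * norm x"
          unfolding Z1_def by (simp add: algebra_simps)
        also have "\<dots> \<le> (Z1 + 1) * norm x" using npos by simp
        also have "\<dots> \<le> 1"
        proof -
          have "norm x \<le> 1 / (Z1 + 1)" using nr unfolding r0_def by linarith
          then show ?thesis using Z1 by (simp add: field_simps)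
        qed
        finally show ?thesis .
      qed
      have S2: "kap * (Dm * norm x + C0 * (norm x)\<^sup>2 + A * norm x) < 1"
      proof -
        have "C0 * (norm x)\<^sup>2 \<le> C0 * norm x" using sq C0(1) by (rule mult_left_mono)
        then have "kap * (Dm * norm x + C0 * (norm x)\<^sup>2 + A * norm x) \<le> kap * (Dm * norm x + C0 * norm x + A * norm x)"
          using kap1 by (intro mult_left_mono) auto
        also have "\<dots> = Z2 * norm x" unfolding Z2_def by (simp add: algebra_simps)
        also have "\<dots> < (Z2 + 1) * norm x" using npos by simp
        also have "\<dots> \<le> 1"
        proof -
          have "norm x \<le> 1 / (Z2 + 1)" using nr unfolding r0_def by linarith
          then show ?thesis using Z2 by (simp add: field_simps)
        qed
        finally show ?thesis .
      qed
      have Dx: "norm (nd x) \<le> Dm" using Dm(2)[OF xc] by simp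
      note q = fl.Q_ge[OF x0 L2 _ dpos M1(2)[OF xc] Dx C0(2)[OF n1] C0(1) _ _ S1 S2]
      have "fl.del x > 0" "tr (fl.F' x) - (norm (fl.F x))\<^sup>2 \<ge> W x"
        using q NN2 unfolding NNeq W_def by (auto simp: kap_def A_def)
      then show ?thesis using x0 L2 by auto
    qed
    have test: "(\<integral>\<^sup>+x\<in>U. ennreal (W x * (\<phi> x)\<^sup>2) \<partial>lborel) \<le> (\<integral>\<^sup>+x\<in>U. ennreal ((norm (gg x))\<^sup>2) \<partial>lborel)"
      if tf: "test_fun U \<phi> gg" for \<phi> gg
    proof (rule hardy_test[OF Uo _ _ Wm W0 _ tf])
      show "(fl.F has_derivative fl.F' x) (at x)" if "x \<in> U" for x
        using ptwise[OF that] by (intro fl.F_deriv) auto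
      show "continuous_on U (\<lambda>x. fl.F' x v)" for v
      proof (rule fl.F'_cont)
        fix x assume "x \<in> U"
        from ptwise[OF this] show "x \<noteq> 0 \<and> fl.del x \<noteq> 0 \<and> fl.Lg x \<noteq> 0" by auto
      qed
      show "W x \<le> tr (fl.F' x) - (norm (fl.F x))\<^sup>2" if "x \<in> U" for x using ptwise[OF that] by auto
    qed
    have key: "(\<integral>\<^sup>+x\<in>U. ennreal (W x * (u x)\<^sup>2) \<partial>lborel) \<le> (\<integral>\<^sup>+x\<in>U. ennreal ((norm (G x))\<^sup>2) \<partial>lborel)"
    proof (rule H10_pass[OF Uo Wm W0 test])
      show "H10 U u G" using HU unfolding U_def .
    qed
    have mu: "u \<in> borel_measurable lborel" using HU by (simp add: H10_def)
    have "(\<integral>\<^sup>+x\<in>U. ennreal (W x * (u x)\<^sup>2) \<partial>lborel) =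
       (\<integral>\<^sup>+x. ennreal (NN'\<^sup>2 / 4) * (ennreal ((u x)\<^sup>2 / (norm x)\<^sup>2) * indicator U x)
           + ennreal (1/4) * (ennreal ((u x)\<^sup>2 / ((norm x)\<^sup>2 * (ln (norm x))\<^sup>2)) * indicator U x) \<partial>lborel)"
    proof (rule nn_integral_cong)
      fix x
      have "W x * (u x)\<^sup>2 = NN'\<^sup>2 / 4 * ((u x)\<^sup>2 / (norm x)\<^sup>2) + 1/4 * ((u x)\<^sup>2 / ((norm x)\<^sup>2 * (ln (norm x))\<^sup>2))"
        unfolding W_def by (simp add: field_simps)
      then have "ennreal (W x * (u x)\<^sup>2) = ennreal (NN'\<^sup>2 / 4) * ennreal ((u x)\<^sup>2 / (norm x)\<^sup>2)
          + ennreal (1/4) * ennreal ((u x)\<^sup>2 / ((norm x)\<^sup>2 * (ln (norm x))\<^sup>2))"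
        by (simp add: ennreal_mult[symmetric] ennreal_plus[symmetric] del: ennreal_plus)
      then show "ennreal (W x * (u x)\<^sup>2) * indicator U x = ennreal (NN'\<^sup>2 / 4) * (ennreal ((u x)\<^sup>2 / (norm x)\<^sup>2) * indicator U x)
           + ennreal (1/4) * (ennreal ((u x)\<^sup>2 / ((norm x)\<^sup>2 * (ln (norm x))\<^sup>2)) * indicator U x)"
        by (cases "x \<in> U") auto
    qed
    also have "\<dots> = ennreal (NN'\<^sup>2 / 4) * (\<integral>\<^sup>+x\<in>U. ennreal ((u x)\<^sup>2 / (norm x)\<^sup>2) \<partial>lborel)
        + ennreal (1/4) * (\<integral>\<^sup>+x\<in>U. ennreal ((u x)\<^sup>2 / ((norm x)\<^sup>2 * (ln (norm x))\<^sup>2)) \<partial>lborel)"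
      using mu Uo by (subst nn_integral_add) (auto simp: nn_integral_cmult)
    finally show ?thesis using key unfolding U_def NN'_def by simp
  qed
  show ?thesis
    by (rule exI[of _ "1/4"], simp, rule exI[of _ r0]) (use r0pos r01 main in auto)
qed

end
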